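(* Let $n \geq 3$. If $H$ is a bi-orderable subgroup of $B_n(D)$ such that $P_n(D) \subset H \subset B_n(D)$, then $H = P_n(D)$. In other words, $P_n(D)$ is a maximal bi-orderable subgroup of $B_n(D)$; equivalently, every subgroup $H$ with $P_n(D) \subsetneq H \subset B_n(D)$ is not bi-orderable.
   Context: $D$ denotes the closed disk. $B_n(D)$ is the Artin braid group on $n$ strands, i.e. the group with generators $\sigma_1,\dots,\sigma_{n-1}$ and relations $\sigma_i\sigma_j=\sigma_j\sigma_i$ for $|i-j|\ge 2$ and $\sigma_i\sigma_{i+1}\sigma_i=\sigma_{i+1}\sigma_i\sigma_{i+1}$ for $1\le i\le n-2$. The permutation homomorphism $\pi: B_n(D)\to S_n$ is determined by $\pi(\sigma_i)=(i,i+1)$, and the pure braid group is $P_n(D)=\ker \pi$. A group is bi-orderable if it admits a strict total ordering $<$ such that $x<y$ implies $gx<gy$ and $xg<yg$ for all $x,y,g$. *)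

theory Defs
  imports "HOL-Algebra.Group" "HOL-Combinatorics.Transposition"
begin

text \<open>Braid words: a letter (i, True) is sigma_i, (i, False) is sigma_i^{-1}.\<close>
type_synonym bword = "(nat \<times> bool) list"

definition valid_bword :: "nat \<Rightarrow> bword \<Rightarrow> bool" where
  "valid_bword n w \<longleftrightarrow> (\<forall>(i, e) \<in> set w. 1 \<le> i \<and> i \<le> n - 1)"

inductive braid_rel :: "nat \<Rightarrow> bword \<Rightarrow> bword \<Rightarrow> bool" for n where
  cancel: "\<lbrakk>1 \<le> i; i \<le> n - 1\<rbrakk> \<Longrightarrow> braid_rel n [(i, e), (i, \<not> e)] []"
| far: "\<lbrakk>1 \<le> i; i \<le> n - 1; 1 \<le> j; j \<le> n - 1; i + 2 \<le> j \<or> j + 2 \<le> i\<rbrakk>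
        \<Longrightarrow> braid_rel n [(i, True), (j, True)] [(j, True), (i, True)]"
| braid: "\<lbrakk>1 \<le> i; i \<le> n - 2\<rbrakk>
        \<Longrightarrow> braid_rel n [(i, True), (Suc i, True), (i, True)] [(Suc i, True), (i, True), (Suc i, True)]"

inductive braid_cong :: "nat \<Rightarrow> bword \<Rightarrow> bword \<Rightarrow> bool" for n where
  base: "braid_rel n u v \<Longrightarrow> braid_cong n u v"
| refl: "braid_cong n u u"
| sym: "braid_cong n u v \<Longrightarrow> braid_cong n v u"
| trans: "braid_cong n u v \<Longrightarrow> braid_cong n v w \<Longrightarrow> braid_cong n u w"
| ctxt: "braid_cong n u v \<Longrightarrow> braid_cong n (a @ u @ b) (a @ v @ b)"

definition braid_class :: "nat \<Rightarrow> bword \<Rightarrow> bword set" where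
  "braid_class n w = {v. valid_bword n v \<and> braid_cong n w v}"

definition braid_group :: "nat \<Rightarrow> bword set monoid" where
  "braid_group n = \<lparr> carrier = {braid_class n w | w. valid_bword n w},
     mult = (\<lambda>X Y. braid_class n ((SOME u. u \<in> X) @ (SOME v. v \<in> Y))),
     one = braid_class n [] \<rparr>"

fun perm_of_bword :: "bword \<Rightarrow> nat \<Rightarrow> nat" where
  "perm_of_bword [] = id"
| "perm_of_bword ((i, e) # w) = transpose i (Suc i) \<circ> perm_of_bword w"

definition braid_perm :: "bword set \<Rightarrow> nat \<Rightarrow> nat" where
  "braid_perm X = perm_of_bword (SOME w. w \<in> X)"

definition pure_braid_group :: "nat \<Rightarrow> bword set set" where
  "pure_braid_group n = {X \<in> carrier (braid_group n). braid_perm X = id}"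

definition bi_orderable :: "('a, 'b) monoid_scheme \<Rightarrow> 'a set \<Rightarrow> bool" where
  "bi_orderable G H \<longleftrightarrow> (\<exists>less :: 'a \<Rightarrow> 'a \<Rightarrow> bool.
     (\<forall>x\<in>H. \<not> less x x) \<and>
     (\<forall>x\<in>H. \<forall>y\<in>H. \<forall>z\<in>H. less x y \<longrightarrow> less y z \<longrightarrow> less x z) \<and>
     (\<forall>x\<in>H. \<forall>y\<in>H. x \<noteq> y \<longrightarrow> less x y \<or> less y x) \<and>
     (\<forall>x\<in>H. \<forall>y\<in>H. \<forall>g\<in>H. less x y \<longrightarrow>
        less (g \<otimes>\<^bsub>G\<^esub> x) (g \<otimes>\<^bsub>G\<^esub> y) \<and> less (x \<otimes>\<^bsub>G\<^esub> g) (y \<otimes>\<^bsub>G\<^esub> g)))"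

end

theory Submission
  imports Defs "HOL-Combinatorics.Permutations" "HOL-Combinatorics.Orbits"
begin


lemma bc_app: "braid_cong n u u' \<Longrightarrow> braid_cong n v v' \<Longrightarrow> braid_cong n (u@v) (u'@v')"
proof -
  assume a: "braid_cong n u u'" and b: "braid_cong n v v'"
  have "braid_cong n ([]@u@v) ([]@u'@v)" by (rule braid_cong.ctxt[OF a])
  moreover have "braid_cong n (u'@v@[]) (u'@v'@[])" by (rule braid_cong.ctxt[OF b])
  ultimately show ?thesis by (auto intro: braid_cong.trans)
qed

lemma bc_ctxt: "braid_cong n u v \<Longrightarrow> braid_cong n (a@u@b) (a@v@b)"
  by (rule braid_cong.ctxt)

definition inl :: "nat \<times> bool \<Rightarrow> nat \<times> bool" where "inl x = (fst x, \<not> snd x)"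
definition invw :: "bword \<Rightarrow> bword" where "invw w = rev (map inl w)"

lemma valid_app[simp]: "valid_bword n (u@v) \<longleftrightarrow> valid_bword n u \<and> valid_bword n v"
  by (auto simp: valid_bword_def)
lemma valid_Cons[simp]: "valid_bword n (x#v) \<longleftrightarrow> 1 \<le> fst x \<and> fst x \<le> n - 1 \<and> valid_bword n v"
  by (cases x) (auto simp: valid_bword_def)
lemma valid_Nil[simp]: "valid_bword n []"
  by (auto simp: valid_bword_def)
lemma valid_invw[simp]: "valid_bword n (invw w) \<longleftrightarrow> valid_bword n w"
  by (auto simp: valid_bword_def invw_def inl_def)

lemma bc_cancel: "1 \<le> i \<Longrightarrow> i \<le> n - 1 \<Longrightarrow> braid_cong n [(i,e),(i,\<not>e)] []"
  by (rule braid_cong.base, rule braid_rel.cancel) auto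

lemma bc_inv_right: "valid_bword n w \<Longrightarrow> braid_cong n (w @ invw w) []"
proof (induction w)
  case Nil then show ?case by (simp add: invw_def braid_cong.refl)
next
  case (Cons x w)
  obtain i e where x: "x = (i,e)" by (cases x)
  have "braid_cong n ([x] @ (w @ invw w) @ [inl x]) ([x] @ [] @ [inl x])"
    by (rule bc_ctxt) (use Cons in auto)
  moreover have "braid_cong n [x, inl x] []" using Cons.prems x by (auto simp: inl_def intro!: bc_cancel)
  ultimately show ?case by (auto simp: invw_def intro: braid_cong.trans)
qed

lemma invw_invw[simp]: "invw (invw w) = w"
  by (induction w) (auto simp: invw_def inl_def)

lemma bc_inv_left: "valid_bword n w \<Longrightarrow> braid_cong n (invw w @ w) []"
  using bc_inv_right[of n "invw w"] by simp



lemma perm_app[simp]: "perm_of_bword (u@v) = perm_of_bword u \<circ> perm_of_bword v"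
  by (induction u rule: perm_of_bword.induct) (auto simp: o_assoc)

fun qp :: "bword \<Rightarrow> nat \<Rightarrow> nat" where
  "qp [] = id"
| "qp ((i,e)#w) = qp w \<circ> transpose i (Suc i)"

lemma qp_app[simp]: "qp (u@v) = qp v \<circ> qp u"
  by (induction u rule: qp.induct) (auto simp: o_assoc)

fun lk :: "bword \<Rightarrow> nat \<Rightarrow> nat \<Rightarrow> int" where
  "lk [] a b = 0"
| "lk ((i,e)#w) a b = (if (a = i \<and> b = Suc i) \<or> (a = Suc i \<and> b = i) then (if e then 1 else -1) else 0)
      + lk w (transpose i (Suc i) a) (transpose i (Suc i) b)"

lemma lk_app: "lk (u@v) a b = lk u a b + lk v (qp u a) (qp u b)"
  by (induction u arbitrary: a b rule: qp.induct) auto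

lemma rel_inv: "braid_rel n u v \<Longrightarrow> perm_of_bword u = perm_of_bword v \<and> qp u = qp v \<and> lk u = lk v"
proof (induction rule: braid_rel.induct)
  case (cancel i e)
  show ?case by (auto simp: fun_eq_iff transpose_def)
next
  case (far i j)
  then show ?case by (auto simp: fun_eq_iff transpose_def)
next
  case (braid i)
  then show ?case by (auto simp: fun_eq_iff transpose_def)
qed

lemma cong_inv: "braid_cong n u v \<Longrightarrow> perm_of_bword u = perm_of_bword v \<and> qp u = qp v \<and> lk u = lk v"
proof (induction rule: braid_cong.induct)
  case (base u v) then show ?case by (rule rel_inv)
next
  case (ctxt u v a b)
  then show ?case by (auto simp: fun_eq_iff lk_app)
qed auto

lemma qp_perm: "qp w \<circ> perm_of_bword w = id"
  by (induction w rule: qp.induct) (auto simp: fun_eq_iff)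



abbreviation cls where "cls n w \<equiv> braid_class n w"

lemma cls_cong: "braid_cong n a b \<Longrightarrow> cls n a = cls n b"
  unfolding braid_class_def by (auto intro: braid_cong.trans braid_cong.sym)

lemma cls_mem: "valid_bword n w \<Longrightarrow> w \<in> cls n w"
  by (auto simp: braid_class_def intro: braid_cong.refl)

lemma cls_eq_iff: "valid_bword n v \<Longrightarrow> cls n u = cls n v \<longleftrightarrow> braid_cong n u v"
  using cls_mem[of n v] cls_cong[of n u v] by (auto simp: braid_class_def)

lemma some_cls: "valid_bword n w \<Longrightarrow> (SOME u. u \<in> cls n w) \<in> cls n w"
  using cls_mem by (metis someI)

lemma some_cls_cong: "valid_bword n w \<Longrightarrow> braid_cong n w (SOME u. u \<in> cls n w)"
  using some_cls[of n w] by (auto simp: braid_class_def)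

lemma some_cls_valid: "valid_bword n w \<Longrightarrow> valid_bword n (SOME u. u \<in> cls n w)"
  using some_cls[of n w] by (auto simp: braid_class_def)

lemma carrier_bg: "carrier (braid_group n) = {cls n w | w. valid_bword n w}"
  by (simp add: braid_group_def)

lemma mult_bg: "valid_bword n u \<Longrightarrow> valid_bword n v \<Longrightarrow> cls n u \<otimes>\<^bsub>braid_group n\<^esub> cls n v = cls n (u@v)"
  unfolding braid_group_def apply simp
  apply (rule cls_cong)
  apply (rule braid_cong.sym)
  apply (rule bc_app)
  by (auto intro: some_cls_cong)

lemma one_bg: "\<one>\<^bsub>braid_group n\<^esub> = cls n []"
  by (simp add: braid_group_def)

lemma cls_in_carrier: "valid_bword n w \<Longrightarrow> cls n w \<in> carrier (braid_group n)"
  by (auto simp: carrier_bg)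

lemma group_bg: "group (braid_group n)"
proof (rule groupI)
  fix x y assume "x \<in> carrier (braid_group n)" "y \<in> carrier (braid_group n)"
  then show "x \<otimes>\<^bsub>braid_group n\<^esub> y \<in> carrier (braid_group n)"
    by (auto simp: carrier_bg mult_bg)
next
  show "\<one>\<^bsub>braid_group n\<^esub> \<in> carrier (braid_group n)" by (auto simp: carrier_bg one_bg)
next
  fix x y z assume "x \<in> carrier (braid_group n)" "y \<in> carrier (braid_group n)" "z \<in> carrier (braid_group n)"
  then show "x \<otimes>\<^bsub>braid_group n\<^esub> y \<otimes>\<^bsub>braid_group n\<^esub> z = x \<otimes>\<^bsub>braid_group n\<^esub> (y \<otimes>\<^bsub>braid_group n\<^esub> z)"
    by (auto simp: carrier_bg mult_bg)
next
  fix x assume "x \<in> carrier (braid_group n)"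
  then show "\<one>\<^bsub>braid_group n\<^esub> \<otimes>\<^bsub>braid_group n\<^esub> x = x"
    by (auto simp: carrier_bg mult_bg one_bg)
next
  fix x assume "x \<in> carrier (braid_group n)"
  then obtain w where w: "valid_bword n w" "x = cls n w" by (auto simp: carrier_bg)
  show "\<exists>y\<in>carrier (braid_group n). y \<otimes>\<^bsub>braid_group n\<^esub> x = \<one>\<^bsub>braid_group n\<^esub>"
    apply (rule bexI[of _ "cls n (invw w)"])
    using w by (auto simp: mult_bg one_bg intro!: cls_cong bc_inv_left cls_in_carrier)
qed

lemma inv_bg: "valid_bword n w \<Longrightarrow> inv\<^bsub>braid_group n\<^esub> (cls n w) = cls n (invw w)"
  apply (rule group.inv_equality[OF group_bg])
  by (auto simp: mult_bg one_bg intro!: cls_cong bc_inv_left cls_in_carrier)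

lemma perm_cls: "valid_bword n w \<Longrightarrow> braid_perm (cls n w) = perm_of_bword w"
  unfolding braid_perm_def using some_cls_cong cong_inv by metis

fun pw :: "nat \<Rightarrow> bword \<Rightarrow> bword" where
  "pw 0 w = []" | "pw (Suc m) w = pw m w @ w"

lemma valid_pw[simp]: "valid_bword n w \<Longrightarrow> valid_bword n (pw m w)"
  by (induction m) auto

lemma pow_bg: "valid_bword n w \<Longrightarrow> cls n w [^]\<^bsub>braid_group n\<^esub> (m::nat) = cls n (pw m w)"
  by (induction m) (auto simp: one_bg mult_bg)



lemma biord_root:
  assumes grp: "group G" and sg: "subgroup H G" and bo: "bi_orderable G H"
    and u: "u \<in> H" and v: "v \<in> H" and m: "m > 0" and eq: "u [^]\<^bsub>G\<^esub> (m::nat) = v [^]\<^bsub>G\<^esub> m"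
  shows "u = v"
proof (rule ccontr)
  assume ne: "u \<noteq> v"
  obtain less where irr: "\<forall>x\<in>H. \<not> less x x"
    and tr: "\<forall>x\<in>H. \<forall>y\<in>H. \<forall>z\<in>H. less x y \<longrightarrow> less y z \<longrightarrow> less x z"
    and tot: "\<forall>x\<in>H. \<forall>y\<in>H. x \<noteq> y \<longrightarrow> less x y \<or> less y x"
    and inv: "\<forall>x\<in>H. \<forall>y\<in>H. \<forall>g\<in>H. less x y \<longrightarrow> less (g \<otimes>\<^bsub>G\<^esub> x) (g \<otimes>\<^bsub>G\<^esub> y) \<and> less (x \<otimes>\<^bsub>G\<^esub> g) (y \<otimes>\<^bsub>G\<^esub> g)"
    using bo unfolding bi_orderable_def by blast
  have powH: "\<And>x k. x \<in> H \<Longrightarrow> x [^]\<^bsub>G\<^esub> (k::nat) \<in> H"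
  proof -
    fix x k assume "x \<in> H" then show "x [^]\<^bsub>G\<^esub> (k::nat) \<in> H"
      by (induction k) (auto intro: subgroup.m_closed[OF sg] subgroup.one_closed[OF sg])
  qed
  have key: "\<And>a b. a \<in> H \<Longrightarrow> b \<in> H \<Longrightarrow> less a b \<Longrightarrow> less (a [^]\<^bsub>G\<^esub> (Suc k)) (b [^]\<^bsub>G\<^esub> (Suc k))" for k
  proof (induction k)
    case 0
    have "\<one>\<^bsub>G\<^esub> \<otimes>\<^bsub>G\<^esub> a = a" "\<one>\<^bsub>G\<^esub> \<otimes>\<^bsub>G\<^esub> b = b"
      using 0 subgroup.mem_carrier[OF sg] group.is_monoid[OF grp] by (auto simp: monoid.l_one)
    then show ?case using 0 by simp
  next
    case (Suc k)
    have ak: "a [^]\<^bsub>G\<^esub> Suc k \<in> H" "b [^]\<^bsub>G\<^esub> Suc k \<in> H" using powH[OF Suc.prems(1)] powH[OF Suc.prems(2)] by blast+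
    have 1: "less (a [^]\<^bsub>G\<^esub> Suc k \<otimes>\<^bsub>G\<^esub> a) (b [^]\<^bsub>G\<^esub> Suc k \<otimes>\<^bsub>G\<^esub> a)"
      using inv Suc ak by blast
    have 2: "less (b [^]\<^bsub>G\<^esub> Suc k \<otimes>\<^bsub>G\<^esub> a) (b [^]\<^bsub>G\<^esub> Suc k \<otimes>\<^bsub>G\<^esub> b)"
      using inv Suc ak by blast
    have 3: "less (a [^]\<^bsub>G\<^esub> Suc k \<otimes>\<^bsub>G\<^esub> a) (b [^]\<^bsub>G\<^esub> Suc k \<otimes>\<^bsub>G\<^esub> b)"
      using tr 1 2 ak Suc.prems subgroup.m_closed[OF sg] by blast
    then show ?case by simp
  qed
  obtain k where k: "m = Suc k" using m by (cases m) auto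
  from tot u v ne have "less u v \<or> less v u" by blast
  then show False
  proof
    assume "less u v" then have "less (u [^]\<^bsub>G\<^esub> m) (v [^]\<^bsub>G\<^esub> m)" using key u v k by blast
    then show False using irr eq powH v by auto
  next
    assume "less v u" then have "less (v [^]\<^bsub>G\<^esub> m) (u [^]\<^bsub>G\<^esub> m)" using key u v k by blast
    then show False using irr eq powH v by auto
  qed
qed

lemma conj_pow:
  fixes G (structure)
  assumes grp: "group G" and g: "g \<in> carrier G" and x: "x \<in> carrier G"
  shows "(g \<otimes>\<^bsub>G\<^esub> x \<otimes>\<^bsub>G\<^esub> inv\<^bsub>G\<^esub> g) [^]\<^bsub>G\<^esub> (m::nat) = g \<otimes>\<^bsub>G\<^esub> x [^]\<^bsub>G\<^esub> m \<otimes>\<^bsub>G\<^esub> inv\<^bsub>G\<^esub> g"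
proof -
  interpret group G by (rule grp)
  show ?thesis
  proof (induction m)
    case 0 then show ?case using g by simp
  next
    case (Suc m)
    have cl: "\<And>y. y \<in> carrier G \<Longrightarrow> inv g \<otimes> (g \<otimes> y) = y" using g by (simp add: m_assoc[symmetric])
    have "(g \<otimes> x \<otimes> inv g) [^] Suc m = (g \<otimes> x [^] m \<otimes> inv g) \<otimes> (g \<otimes> x \<otimes> inv g)"
      using Suc by simp
    also have "\<dots> = g \<otimes> (x [^] m \<otimes> (inv g \<otimes> g) \<otimes> x) \<otimes> inv g" using g x by (simp add: m_assoc cl)
    also have "\<dots> = g \<otimes> x [^] Suc m \<otimes> inv g" using g x by (simp add: m_assoc)
    finally show ?case .
  qed
qed

lemma biord_comm:
  fixes G (structure)
  assumes grp: "group G" and sg: "subgroup H G" and bo: "bi_orderable G H"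
    and x: "x \<in> H" and g: "g \<in> H" and m: "m > 0"
    and c: "g \<otimes>\<^bsub>G\<^esub> x [^]\<^bsub>G\<^esub> (m::nat) = x [^]\<^bsub>G\<^esub> m \<otimes>\<^bsub>G\<^esub> g"
  shows "g \<otimes>\<^bsub>G\<^esub> x = x \<otimes>\<^bsub>G\<^esub> g"
proof -
  interpret group G by (rule grp)
  have gc: "g \<in> carrier G" and xc: "x \<in> carrier G" using x g subgroup.mem_carrier[OF sg] by auto
  have yH: "g \<otimes> x \<otimes> inv g \<in> H" using x g sg by (auto intro: subgroup.m_closed subgroup.m_inv_closed)
  have "(g \<otimes> x \<otimes> inv g) [^] m = g \<otimes> x [^] m \<otimes> inv g" by (rule conj_pow[OF grp gc xc])
  also have "\<dots> = x [^] m \<otimes> g \<otimes> inv g" using c by simp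
  also have "\<dots> = x [^] m" using gc xc by (simp add: m_assoc)
  finally have "g \<otimes> x \<otimes> inv g = x" using biord_root[OF grp sg bo yH x m] by blast
  then have "g \<otimes> x \<otimes> inv g \<otimes> g = x \<otimes> g" by simp
  then show ?thesis using gc xc by (simp add: m_assoc)
qed



definition comm :: "nat \<Rightarrow> nat \<times> bool \<Rightarrow> nat \<times> bool \<Rightarrow> bool" where
  "comm n x y \<longleftrightarrow> braid_cong n [x,y] [y,x]"

lemma bc_trans3: "braid_cong n a b \<Longrightarrow> braid_cong n b c \<Longrightarrow> braid_cong n c d \<Longrightarrow> braid_cong n a d"
  by (meson braid_cong.trans)

lemma comm_sym: "comm n x y \<Longrightarrow> comm n y x"
  by (auto simp: comm_def intro: braid_cong.sym)

lemma comm_inl1: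
  assumes c: "comm n x y" and v: "1 \<le> fst x" "fst x \<le> n - 1"
  shows "comm n (inl x) y"
proof -
  obtain i e where x: "x = (i,e)" by (cases x)
  have c1: "braid_cong n [x, inl x] []" and c2: "braid_cong n [inl x, x] []"
    using v x bc_cancel[of i n e] bc_cancel[of i n "\<not>e"] by (auto simp: inl_def)
  have "braid_cong n [inl x, y] ([inl x, y] @ [x, inl x] @ [])"
    using bc_ctxt[OF braid_cong.sym[OF c1], of "[inl x, y]" "[]"] by simp
  moreover have "braid_cong n ([inl x] @ [y, x] @ [inl x]) ([inl x] @ [x, y] @ [inl x])"
    using bc_ctxt[OF braid_cong.sym[OF c[unfolded comm_def]]] by blast
  moreover have "braid_cong n ([] @ [inl x, x] @ [y, inl x]) ([] @ [] @ [y, inl x])"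
    using bc_ctxt[OF c2] by blast
  ultimately show ?thesis unfolding comm_def by (auto intro: bc_trans3)
qed

lemma comm_far:
  assumes "1 \<le> fst x" "fst x \<le> n - 1" "1 \<le> fst y" "fst y \<le> n - 1" "fst x + 2 \<le> fst y \<or> fst y + 2 \<le> fst x"
  shows "comm n x y"
proof -
  obtain i e where x: "x = (i,e)" by (cases x)
  obtain j f where y: "y = (j,f)" by (cases y)
  have tt: "comm n (i,True) (j,True)" unfolding comm_def
    by (rule braid_cong.base, rule braid_rel.far) (use assms x y in auto)
  have tt': "comm n (i,b) (j,True)" for b
  proof (cases b)
    case False
    then show ?thesis using comm_inl1[OF tt] assms x by (auto simp: inl_def)
  qed (use tt in auto)
  have "comm n (j,c) (i,b)" for b c
  proof (cases c)
    case True then show ?thesis using comm_sym[OF tt'] by auto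
  next
    case False then show ?thesis using comm_inl1[OF comm_sym[OF tt'[of b]]] assms y by (auto simp: inl_def)
  qed
  then show ?thesis using x y comm_sym by blast
qed

lemma comm_word: "(\<forall>y\<in>set w. comm n x y) \<Longrightarrow> braid_cong n (x#w) (w@[x])"
proof (induction w)
  case Nil then show ?case by (auto intro: braid_cong.refl)
next
  case (Cons y w)
  have "braid_cong n ([] @ [x,y] @ w) ([] @ [y,x] @ w)"
    using Cons.prems bc_ctxt[of n "[x,y]" "[y,x]" "[]" w] by (simp add: comm_def)
  moreover have "braid_cong n ([y] @ (x#w) @ []) ([y] @ (w@[x]) @ [])"
    using Cons.IH Cons.prems bc_ctxt[of n "x#w" "w@[x]" "[y]" "[]"] by simp
  ultimately show ?case by (auto intro: braid_cong.trans)
qed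

lemma comm_words: "(\<forall>x\<in>set u. \<forall>y\<in>set w. comm n x y) \<Longrightarrow> braid_cong n (u@w) (w@u)"
proof (induction u)
  case Nil then show ?case by (auto intro: braid_cong.refl)
next
  case (Cons x u)
  have "braid_cong n ([x] @ (u@w) @ []) ([x] @ (w@u) @ [])"
    using Cons.IH Cons.prems bc_ctxt[of n "u@w" "w@u" "[x]" "[]"] by simp
  moreover have "braid_cong n ([] @ (x#w) @ u) ([] @ (w@[x]) @ u)"
    using Cons.prems comm_word bc_ctxt by (metis list.set_intros(1))
  ultimately show ?case by (auto intro: braid_cong.trans)
qed

definition dd :: "nat \<Rightarrow> bword" where "dd k = map (\<lambda>i. (i,True)) [1..<k]"

lemma D1:
  assumes "1 \<le> i" "i + 2 \<le> k" "k \<le> n"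
  shows "braid_cong n (dd k @ [(i,True)]) ((Suc i,True) # dd k)"
proof -
  let ?A = "map (\<lambda>i. (i,True)) [1..<i]" and ?C = "map (\<lambda>i. (i,True)) [i+2..<k]"
  have split: "[1..<k] = [1..<i] @ [i, Suc i] @ [i+2..<k]"
  proof -
    have a: "[1..<k] = [1..<i] @ [i..<k]" using assms upt_add_eq_append[of 1 i "k-i"] by simp
    have b: "[i..<k] = [i, Suc i] @ [i+2..<k]" using assms by (simp add: upt_conv_Cons)
    show ?thesis using a b by simp
  qed
  have dk: "dd k = ?A @ [(i,True),(Suc i,True)] @ ?C" unfolding dd_def split by simp
  have c1: "braid_cong n (?C @ [(i,True)]) ([(i,True)] @ ?C)"
  proof -
    have "\<forall>y\<in>set ?C. comm n (i,True) y" using assms by (auto intro!: comm_far)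
    from braid_cong.sym[OF comm_word[OF this]] show ?thesis by simp
  qed
  have c2: "braid_cong n ([(i,True),(Suc i,True),(i,True)]) ([(Suc i,True),(i,True),(Suc i,True)])"
    by (rule braid_cong.base, rule braid_rel.braid) (use assms in auto)
  have c3: "braid_cong n (?A @ [(Suc i,True)]) ([(Suc i,True)] @ ?A)"
  proof -
    have "\<forall>y\<in>set ?A. comm n (Suc i,True) y" using assms by (auto intro!: comm_far)
    from braid_cong.sym[OF comm_word[OF this]] show ?thesis by simp
  qed
  have "braid_cong n ((?A @ [(i,True),(Suc i,True)]) @ (?C @ [(i,True)]) @ []) ((?A @ [(i,True),(Suc i,True)]) @ ([(i,True)] @ ?C) @ [])"
    by (rule bc_ctxt[OF c1])
  moreover have "braid_cong n (?A @ [(i,True),(Suc i,True),(i,True)] @ ?C) (?A @ [(Suc i,True),(i,True),(Suc i,True)] @ ?C)"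
    by (rule bc_ctxt[OF c2])
  moreover have "braid_cong n ([] @ (?A @ [(Suc i,True)]) @ [(i,True),(Suc i,True)] @ ?C) ([] @ ([(Suc i,True)] @ ?A) @ [(i,True),(Suc i,True)] @ ?C)"
    by (rule bc_ctxt[OF c3])
  ultimately show ?thesis unfolding dk by (auto intro: bc_trans3)
qed

lemma dd_Suc: "1 \<le> k \<Longrightarrow> dd (Suc k) = dd k @ [(k,True)]"
  by (simp add: dd_def)

lemma D2:
  assumes "j + 2 \<le> k" "k \<le> n"
  shows "braid_cong n (dd k @ dd (Suc j)) (map (\<lambda>i. (i,True)) [2..<j+2] @ dd k)"
  using assms
proof (induction j)
  case 0 then show ?case by (simp add: dd_def braid_cong.refl)
next
  case (Suc j)
  have ih: "braid_cong n (dd k @ dd (Suc j)) (map (\<lambda>i. (i,True)) [2..<j+2] @ dd k)"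
    using Suc by simp
  have e1: "dd (Suc (Suc j)) = dd (Suc j) @ [(Suc j, True)]" by (simp add: dd_Suc)
  have e2: "map (\<lambda>i. (i,True)) [2..<Suc j+2] = map (\<lambda>i. (i,True)) [2..<j+2] @ [(Suc (Suc j), True)]"
    by simp
  have "braid_cong n ([] @ (dd k @ dd (Suc j)) @ [(Suc j, True)]) ([] @ (map (\<lambda>i. (i,True)) [2..<j+2] @ dd k) @ [(Suc j, True)])"
    by (rule bc_ctxt[OF ih])
  moreover have "braid_cong n (map (\<lambda>i. (i,True)) [2..<j+2] @ (dd k @ [(Suc j, True)]) @ []) (map (\<lambda>i. (i,True)) [2..<j+2] @ ((Suc (Suc j), True) # dd k) @ [])"
    by (rule bc_ctxt[OF D1]) (use Suc.prems in auto)
  ultimately show ?case unfolding e1 e2 by (auto intro: braid_cong.trans)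
qed

lemma D3:
  assumes "2 \<le> k" "k \<le> n"
  shows "braid_cong n (dd k @ dd k) ((1,True) # dd k @ dd (k - 1))"
proof -
  have a: "braid_cong n (dd k @ dd (k-1)) (map (\<lambda>i. (i,True)) [2..<k] @ dd k)"
  proof -
    obtain j where j: "k = j + 2" using assms by (metis add.commute le_Suc_ex)
    show ?thesis using D2[of j k n] assms j by simp
  qed
  have b: "dd k = (1,True) # map (\<lambda>i. (i,True)) [2..<k]"
    using assms by (simp add: dd_def upt_conv_Cons numeral_2_eq_2)
  have "braid_cong n ([(1,True)] @ (dd k @ dd (k-1)) @ []) ([(1,True)] @ (map (\<lambda>i. (i,True)) [2..<k] @ dd k) @ [])"
    by (rule bc_ctxt[OF a])
  moreover have "(1,True) # map (\<lambda>i. (i,True)) [2..<k] @ dd k = dd k @ dd k"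
    by (metis append_Cons b)
  ultimately have "braid_cong n ((1,True) # dd k @ dd (k-1)) (dd k @ dd k)"
    by (metis append_Cons append_Nil append_Nil2)
  then show ?thesis by (rule braid_cong.sym)
qed

lemma D4:
  assumes "2 \<le> k" "k \<le> n"
  shows "braid_cong n (dd k @ dd k @ [(k-1,True)]) ((1,True) # dd k @ dd k)"
proof -
  have e: "dd k = dd (k-1) @ [(k-1,True)]" using assms dd_Suc[of "k-1"] by simp
  have "braid_cong n ([] @ (dd k @ dd k) @ [(k-1,True)]) ([] @ ((1,True) # dd k @ dd (k - 1)) @ [(k-1,True)])"
    by (rule bc_ctxt[OF D3[OF assms]])
  then show ?thesis by (subst (4) e) simp
qed

lemma pw_Suc': "pw (Suc m) w = w @ pw m w"
  by (induction m) auto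

lemma D5:
  assumes "m + 2 \<le> k" "k \<le> n"
  shows "braid_cong n ((Suc m, True) # pw m (dd k)) (pw m (dd k) @ [(1,True)])"
  using assms
proof (induction m)
  case 0 then show ?case by (simp add: braid_cong.refl)
next
  case (Suc m)
  have "braid_cong n ([] @ (dd k @ [(Suc m,True)]) @ pw m (dd k)) ([] @ ((Suc (Suc m),True) # dd k) @ pw m (dd k))"
    by (rule bc_ctxt[OF D1]) (use Suc.prems in auto)
  moreover have "braid_cong n (dd k @ ((Suc m, True) # pw m (dd k)) @ []) (dd k @ (pw m (dd k) @ [(1,True)]) @ [])"
    by (rule bc_ctxt) (use Suc in auto)
  ultimately show ?case unfolding pw_Suc' by (auto intro: braid_cong.trans braid_cong.sym)
qed

lemma D6:
  assumes "2 \<le> k" "k \<le> n"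
  shows "braid_cong n ((1,True) # pw k (dd k)) (pw k (dd k) @ [(1,True)])"
proof -
  obtain j where j: "k = Suc (Suc j)" using assms by (metis add_2_eq_Suc le_Suc_ex)
  have p: "pw k (dd k) = dd k @ dd k @ pw j (dd k)" unfolding j pw_Suc' by simp
  have "braid_cong n ([] @ ((1,True) # dd k @ dd k) @ pw j (dd k)) ([] @ (dd k @ dd k @ [(k-1,True)]) @ pw j (dd k))"
    by (rule bc_ctxt[OF braid_cong.sym[OF D4[OF assms]]])
  moreover have "braid_cong n ((dd k @ dd k) @ ((Suc j, True) # pw j (dd k)) @ []) ((dd k @ dd k) @ (pw j (dd k) @ [(1,True)]) @ [])"
    by (rule bc_ctxt[OF D5]) (use assms j in auto)
  ultimately show ?thesis unfolding p using j by (auto intro: braid_cong.trans)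
qed




lemma transp_word:
  assumes "a < b"
  shows "\<exists>w. (\<forall>x\<in>set w. a \<le> fst x \<and> fst x < b) \<and> perm_of_bword w = transpose a b"
  using assms
proof (induction b)
  case 0 then show ?case by simp
next
  case (Suc b)
  show ?case
  proof (cases "a = b")
    case True
    then show ?thesis by (intro exI[of _ "[(a,True)]"]) auto
  next
    case False
    then have ab: "a < b" using Suc.prems by simp
    then obtain w where w: "\<forall>x\<in>set w. a \<le> fst x \<and> fst x < b" "perm_of_bword w = transpose a b"
      using Suc.IH by blast
    have "transpose a (Suc b) = transpose b (Suc b) \<circ> transpose a b \<circ> transpose b (Suc b)"
      using ab by (auto simp: fun_eq_iff transpose_def)
    then show ?thesis using w ab
      by (intro exI[of _ "[(b,True)] @ w @ [(b,True)]"]) auto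
  qed
qed

lemma perm_surj:
  assumes "f permutes {m..M}"
  shows "\<exists>w. (\<forall>x\<in>set w. m \<le> fst x \<and> fst x < M) \<and> perm_of_bword w = f"
  using assms(1) finite_atLeastAtMost assms
proof (induction rule: permutes_induct)
  case id
  then show ?case by (intro exI[of _ "[]"]) auto
next
  case (swap a b p)
  then obtain w where w: "\<forall>x\<in>set w. m \<le> fst x \<and> fst x < M" "perm_of_bword w = p"
    by blast
  have "\<exists>v. (\<forall>x\<in>set v. m \<le> fst x \<and> fst x < M) \<and> perm_of_bword v = transpose a b"
  proof (cases "a < b")
    case True
    then obtain v where "\<forall>x\<in>set v. a \<le> fst x \<and> fst x < b" "perm_of_bword v = transpose a b"
      using transp_word by blast
    then show ?thesis using swap.hyps by (intro exI[of _ v]) fastforce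
  next
    case False
    then have "b < a" using swap.hyps by simp
    then obtain v where "\<forall>x\<in>set v. b \<le> fst x \<and> fst x < a" "perm_of_bword v = transpose b a"
      using transp_word by blast
    then show ?thesis using swap.hyps by (intro exI[of _ v]) (fastforce simp: transpose_commute)
  qed
  then obtain v where "\<forall>x\<in>set v. m \<le> fst x \<and> fst x < M" "perm_of_bword v = transpose a b" by blast
  then show ?case using w by (intro exI[of _ "v @ w"]) auto
qed

lemma perm_valid_permutes: "valid_bword n w \<Longrightarrow> perm_of_bword w permutes {1..n}"
proof (induction w rule: perm_of_bword.induct)
  case 1 show ?case unfolding perm_of_bword.simps by (rule permutes_id)
next
  case (2 i e w)
  then have "transpose i (Suc i) permutes {1..n}" "perm_of_bword w permutes {1..n}"
    by (auto simp: valid_bword_def intro!: permutes_swap_id)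
  then show ?case unfolding perm_of_bword.simps by (rule permutes_compose[rotated])
qed

lemma rho_exists:
  assumes "distinct as" "set as \<subseteq> {1..n}" "length as \<le> n"
  shows "\<exists>\<rho>. \<rho> permutes {1..n} \<and> (\<forall>i<length as. \<rho> (as!i) = Suc i)"
  using assms
proof (induction as rule: rev_induct)
  case Nil then show ?case by (intro exI[of _ id] conjI permutes_id) simp
next
  case (snoc x as)
  then obtain \<rho> where r: "\<rho> permutes {1..n}" "\<forall>i<length as. \<rho> (as!i) = Suc i" by auto
  let ?j = "Suc (length as)"
  let ?y = "\<rho> x"
  have xin: "x \<in> {1..n}" using snoc.prems by auto
  have yin: "?y \<in> {1..n}" using permutes_in_image[OF r(1)] xin by simp
  have ynot: "?y \<noteq> Suc i" if "i < length as" for i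
  proof
    assume "?y = Suc i"
    then have "\<rho> x = \<rho> (as!i)" using r(2) that by simp
    then have "x = as!i" using permutes_inj[OF r(1)] by (simp add: inj_eq)
    then show False using snoc.prems(1) that by auto
  qed
  have jin: "?j \<in> {1..n}" using snoc.prems by auto
  show ?case
  proof (intro exI[of _ "transpose ?j ?y \<circ> \<rho>"] conjI allI impI)
    show "transpose ?j ?y \<circ> \<rho> permutes {1..n}"
      using r(1) jin yin by (simp add: permutes_compose permutes_swap_id)
  next
    fix i assume i: "i < length (as @ [x])"
    show "(transpose ?j ?y \<circ> \<rho>) ((as @ [x]) ! i) = Suc i"
    proof (cases "i < length as")
      case True
      then show ?thesis using r(2) ynot[OF True] by (simp add: nth_append transpose_def)
    next
      case False
      then have "i = length as" using i by simp
      then show ?thesis by (simp add: nth_append transpose_def)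
    qed
  qed
qed



lemma rho_inv:
  assumes "\<rho> permutes S" "\<rho> x = y"
  shows "inv_into UNIV \<rho> y = x"
  using assms permutes_inverses(2)[OF assms(1)] by metis

lemma perm_cases:
  fixes \<tau> :: "nat \<Rightarrow> nat"
  assumes tp: "\<tau> permutes {1..n}" and tne: "\<tau> \<noteq> id" and n3: "n \<ge> 3"
  shows "(\<exists>k \<rho>. 3 \<le> k \<and> k \<le> n \<and> \<rho> permutes {1..n} \<and>
            (\<forall>i. 1 \<le> i \<and> i < k \<longrightarrow> (\<rho> \<circ> \<tau> \<circ> inv_into UNIV \<rho>) i = Suc i) \<and> (\<rho> \<circ> \<tau> \<circ> inv_into UNIV \<rho>) k = 1)
       \<or> (\<exists>\<rho>. 4 \<le> n \<and> \<rho> permutes {1..n} \<and> (\<rho> \<circ> \<tau> \<circ> inv_into UNIV \<rho>) 1 = 3 \<and> (\<rho> \<circ> \<tau> \<circ> inv_into UNIV \<rho>) 2 = 4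
            \<and> (\<rho> \<circ> \<tau> \<circ> inv_into UNIV \<rho>) 3 = 1 \<and> (\<rho> \<circ> \<tau> \<circ> inv_into UNIV \<rho>) 4 = 2)
       \<or> (\<exists>\<rho>. \<rho> permutes {1..n} \<and> (\<rho> \<circ> \<tau> \<circ> inv_into UNIV \<rho>) 1 = 2 \<and> (\<rho> \<circ> \<tau> \<circ> inv_into UNIV \<rho>) 2 = 1
            \<and> (\<rho> \<circ> \<tau> \<circ> inv_into UNIV \<rho>) 3 = 3)"
proof -
  have inS: "\<tau> x \<noteq> x \<Longrightarrow> x \<in> {1..n}" for x using permutes_not_in[OF tp] by blast
  have img: "\<tau> x \<in> {1..n} \<longleftrightarrow> x \<in> {1..n}" for x using permutes_in_image[OF tp] .
  have injt: "\<tau> x = \<tau> y \<Longrightarrow> x = y" for x y using permutes_inj[OF tp] by (simp add: inj_eq)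
  show ?thesis
  proof (cases "\<exists>a. \<tau> (\<tau> a) \<noteq> a")
    case True
    then obtain a where a: "\<tau> (\<tau> a) \<noteq> a" by blast
    have ta: "\<tau> a \<noteq> a" using a by auto
    have ain: "a \<in> {1..n}" using inS ta by blast
    have perm: "permutation \<tau>" using tp by (auto simp: permutation_permutes)
    have orb: "a \<in> orbit \<tau> a" by (rule permutation_self_in_orbit[OF perm])
    define k where "k = funpow_dist1 \<tau> a a"
    have kprop: "(\<tau> ^^ k) a = a" unfolding k_def by (rule funpow_dist1_prop[OF orb])
    have dist: "m < k \<Longrightarrow> m' < k \<Longrightarrow> m \<noteq> m' \<Longrightarrow> (\<tau> ^^ m) a \<noteq> (\<tau> ^^ m') a" for m m'
      unfolding k_def by (rule funpow_neq_less_funpow_dist1[OF orb])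
    have k3: "k \<ge> 3"
    proof (rule ccontr)
      assume "\<not> 3 \<le> k"
      then have "k = 1 \<or> k = 2" unfolding k_def by auto
      then show False using kprop ta a by (auto simp: numeral_2_eq_2)
    qed
    define as where "as = map (\<lambda>i. (\<tau> ^^ i) a) [0..<k]"
    have pin: "(\<tau> ^^ i) a \<in> {1..n}" for i
      by (induction i) (use ain img in auto)
    have das: "distinct as" unfolding as_def distinct_map using dist by (auto simp: inj_on_def) blast
    have sas: "set as \<subseteq> {1..n}" unfolding as_def using pin by auto
    have las: "length as \<le> n"
    proof -
      have "card (set as) \<le> card {1..n}" using sas by (intro card_mono) auto
      then show ?thesis using distinct_card[OF das] by simp
    qed
    have lk: "length as = k" unfolding as_def by simp
    obtain \<rho> where r: "\<rho> permutes {1..n}" "\<forall>i<length as. \<rho> (as!i) = Suc i"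
      using rho_exists[OF das sas las] by blast
    have r': "i < k \<Longrightarrow> \<rho> ((\<tau> ^^ i) a) = Suc i" for i using r(2) lk unfolding as_def by auto
    have tv: "i < k \<Longrightarrow> (\<rho> \<circ> \<tau> \<circ> inv_into UNIV \<rho>) (Suc i) = \<rho> ((\<tau> ^^ Suc i) a)" for i
      using rho_inv[OF r(1) r'] by simp
    have A1: "\<forall>i. 1 \<le> i \<and> i < k \<longrightarrow> (\<rho> \<circ> \<tau> \<circ> inv_into UNIV \<rho>) i = Suc i"
    proof (intro allI impI)
      fix i assume i: "1 \<le> i \<and> i < k"
      then obtain j where j: "i = Suc j" by (cases i) auto
      show "(\<rho> \<circ> \<tau> \<circ> inv_into UNIV \<rho>) i = Suc i" using tv[of j] r'[of "Suc j"] i j by simp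
    qed
    have A2: "(\<rho> \<circ> \<tau> \<circ> inv_into UNIV \<rho>) k = 1"
    proof -
      obtain j where j: "k = Suc j" using k3 by (cases k) auto
      show ?thesis using tv[of j] j kprop r'[of 0] by simp
    qed
    show ?thesis using k3 las lk r(1) A1 A2 by blast
  next
    case False
    then have inv2: "\<tau> (\<tau> x) = x" for x by blast
    obtain a where ta: "\<tau> a \<noteq> a" using tne by (auto simp: fun_eq_iff)
    define b where "b = \<tau> a"
    have ain: "a \<in> {1..n}" using inS ta by blast
    have bin: "b \<in> {1..n}" using ain img b_def by blast
    have ab: "a \<noteq> b" using ta b_def by auto
    have tb: "\<tau> b = a" using inv2 b_def by simp
    show ?thesis
    proof (cases "\<exists>c\<in>{1..n}. \<tau> c = c")
      case True
      then obtain c where c: "c \<in> {1..n}" "\<tau> c = c" by blast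
      have ca: "c \<noteq> a" "c \<noteq> b" using c ta tb ab b_def by auto
      have das: "distinct [a,b,c]" using ab ca by auto
      obtain \<rho> where r: "\<rho> permutes {1..n}" "\<forall>i<length [a,b,c]. \<rho> ([a,b,c]!i) = Suc i"
        using rho_exists[OF das, of n] ain bin c n3 by auto
      have r1: "\<rho> a = 1" "\<rho> b = 2" "\<rho> c = 3" using r(2) by (auto dest: spec[of _ 0] spec[of _ 1] spec[of _ 2])
      have i1: "inv_into UNIV \<rho> 1 = a" "inv_into UNIV \<rho> 2 = b" "inv_into UNIV \<rho> 3 = c"
        using rho_inv[OF r(1) r1(1)] rho_inv[OF r(1) r1(2)] rho_inv[OF r(1) r1(3)] by auto
      show ?thesis using r(1) i1 r1 b_def tb c(2) by auto
    next
      case False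
      then have nf: "\<forall>c\<in>{1..n}. \<tau> c \<noteq> c" by blast
      have "card ({1..n} - {a,b}) \<ge> 1"
      proof -
        have "card ({1..n} - {a,b}) = card {1..n} - card {a,b}" using ain bin by (intro card_Diff_subset) auto
        then show ?thesis using n3 ab by simp
      qed
      then have "{1..n} - {a,b} \<noteq> {}" by (metis card.empty not_one_le_zero)
      then obtain c where c: "c \<in> {1..n}" "c \<noteq> a" "c \<noteq> b" by blast
      define d where "d = \<tau> c"
      have din: "d \<in> {1..n}" using c img d_def by blast
      have dc: "d \<noteq> c" using nf c d_def by auto
      have da: "d \<noteq> a" using injt tb c d_def by metis
      have db: "d \<noteq> b" using injt b_def c d_def by metis
      have td: "\<tau> d = c" using inv2 d_def by simp
      have das: "distinct [a,c,b,d]" using ab c dc da db by auto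
      have sas: "set [a,c,b,d] \<subseteq> {1..n}" using ain bin c din by auto
      have n4: "4 \<le> n"
      proof -
        have "card (set [a,c,b,d]) \<le> card {1..n}" using sas by (intro card_mono) auto
        then show ?thesis using distinct_card[OF das] by simp
      qed
      obtain \<rho> where r: "\<rho> permutes {1..n}" "\<forall>i<length [a,c,b,d]. \<rho> ([a,c,b,d]!i) = Suc i"
        using rho_exists[OF das sas] n4 by auto
      have r1: "\<rho> a = 1" "\<rho> c = 2" "\<rho> b = 3" "\<rho> d = 4" using r(2)
        by (auto dest: spec[of _ 0] spec[of _ 1] spec[of _ 2] spec[of _ 3])
      have i1: "inv_into UNIV \<rho> 1 = a" "inv_into UNIV \<rho> 2 = c" "inv_into UNIV \<rho> 3 = b" "inv_into UNIV \<rho> 4 = d"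
        using rho_inv[OF r(1) r1(1)] rho_inv[OF r(1) r1(2)] rho_inv[OF r(1) r1(3)] rho_inv[OF r(1) r1(4)] by auto
      show ?thesis using r(1) i1 r1 b_def tb td d_def n4 by auto
    qed
  qed
qed



lemma cong_pw: "braid_cong n a b \<Longrightarrow> braid_cong n (pw m a) (pw m b)"
  by (induction m) (auto intro: bc_app braid_cong.refl)

lemma WP: "valid_bword n G \<Longrightarrow> braid_cong n (pw m (invw G @ p @ G)) (invw G @ pw m p @ G)"
proof (induction m)
  case 0
  have "braid_cong n (invw G @ [] @ G) []" using bc_inv_left[OF 0] by simp
  then show ?case by (simp add: braid_cong.sym)
next
  case (Suc m)
  have "braid_cong n (pw m (invw G @ p @ G) @ (invw G @ p @ G)) ((invw G @ pw m p @ G) @ (invw G @ p @ G))"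
    by (rule bc_app[OF Suc.IH[OF Suc.prems] braid_cong.refl])
  moreover have "braid_cong n ((invw G @ pw m p) @ (G @ invw G) @ (p @ G)) ((invw G @ pw m p) @ [] @ (p @ G))"
    by (rule bc_ctxt[OF bc_inv_right[OF Suc.prems]])
  ultimately show ?case by (auto intro: braid_cong.trans)
qed

lemma WC:
  assumes "valid_bword n G" "braid_cong n (invw G @ p @ G) (invw G @ q @ G)"
  shows "braid_cong n p q"
proof -
  have c: "braid_cong n (G @ invw G @ r @ G @ invw G) r" for r
  proof -
    have "braid_cong n ((G @ invw G) @ (r @ (G @ invw G))) ([] @ (r @ []))"
      by (intro bc_app bc_inv_right assms braid_cong.refl)
    then show ?thesis by simp
  qed
  have "braid_cong n (G @ (invw G @ p @ G) @ invw G) (G @ (invw G @ q @ G) @ invw G)"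
    by (rule bc_ctxt[OF assms(2)])
  then show ?thesis using c[of p] c[of q] by (auto intro: braid_cong.trans braid_cong.sym)
qed

lemma perm_invw:
  assumes "valid_bword n G"
  shows "perm_of_bword (invw G) = inv_into UNIV (perm_of_bword G)"
proof -
  have "perm_of_bword (G @ invw G) = id" using cong_inv[OF bc_inv_right[OF assms]] by simp
  moreover have "perm_of_bword (invw G @ G) = id" using cong_inv[OF bc_inv_left[OF assms]] by simp
  ultimately show ?thesis by (simp add: inv_unique_comp)
qed

lemma in_H:
  assumes sg: "subgroup H (braid_group n)" and pure: "pure_braid_group n \<subseteq> H"
    and w0: "valid_bword n w0" "cls n w0 \<in> H" and w: "valid_bword n w"
    and pe: "perm_of_bword w = perm_of_bword w0"
  shows "cls n w \<in> H"
proof -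
  have "perm_of_bword (w @ invw w0) = perm_of_bword (w0 @ invw w0)" using pe by simp
  also have "\<dots> = id" using cong_inv[OF bc_inv_right[OF w0(1)]] by simp
  finally have "cls n (w @ invw w0) \<in> pure_braid_group n"
    unfolding pure_braid_group_def using w w0 by (simp add: perm_cls cls_in_carrier)
  then have a: "cls n (w @ invw w0) \<in> H" using pure by blast
  have "cls n (w @ invw w0) \<otimes>\<^bsub>braid_group n\<^esub> cls n w0 \<in> H"
    using subgroup.m_closed[OF sg a w0(2)] .
  moreover have "cls n (w @ invw w0) \<otimes>\<^bsub>braid_group n\<^esub> cls n w0 = cls n w"
  proof -
    have "braid_cong n (w @ (invw w0 @ w0) @ []) (w @ [] @ [])"
      by (rule bc_ctxt[OF bc_inv_left[OF w0(1)]])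
    then show ?thesis using w w0 by (simp add: mult_bg cls_cong)
  qed
  ultimately show ?thesis by simp
qed

lemma root_words:
  assumes sg: "subgroup H (braid_group n)" and pure: "pure_braid_group n \<subseteq> H"
    and bo: "bi_orderable (braid_group n) H"
    and w0: "valid_bword n w0" "cls n w0 \<in> H"
    and r: "\<rho> permutes {1..n}"
    and p: "valid_bword n p" "perm_of_bword p = \<rho> \<circ> perm_of_bword w0 \<circ> inv_into UNIV \<rho>"
    and q: "valid_bword n q" "perm_of_bword q = \<rho> \<circ> perm_of_bword w0 \<circ> inv_into UNIV \<rho>"
    and m: "m > 0" and c: "braid_cong n (pw m p) (pw m q)"
  shows "braid_cong n p q"
proof -
  obtain G where G: "\<forall>x\<in>set G. 1 \<le> fst x \<and> fst x < n" "perm_of_bword G = \<rho>"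
    using perm_surj[OF r] by blast
  have vG: "valid_bword n G" using G(1) by (auto simp: valid_bword_def)
  have ri: "\<rho> \<circ> inv_into UNIV \<rho> = id" "inv_into UNIV \<rho> \<circ> \<rho> = id"
    using permutes_inv_o[OF r] by auto
  have conjH: "cls n (invw G @ s @ G) \<in> H" if s: "valid_bword n s" "perm_of_bword s = \<rho> \<circ> perm_of_bword w0 \<circ> inv_into UNIV \<rho>" for s
  proof (rule in_H[OF sg pure w0])
    show "valid_bword n (invw G @ s @ G)" using vG s by simp
    have "perm_of_bword (invw G @ s @ G) = (inv_into UNIV \<rho> \<circ> \<rho>) \<circ> perm_of_bword w0 \<circ> (inv_into UNIV \<rho> \<circ> \<rho>)"
      using perm_invw[OF vG] G(2) s by (simp add: o_assoc)
    then show "perm_of_bword (invw G @ s @ G) = perm_of_bword w0" using ri by simp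
  qed
  have uH: "cls n (invw G @ p @ G) \<in> H" using conjH p by blast
  have vH: "cls n (invw G @ q @ G) \<in> H" using conjH q by blast
  have "cls n (invw G @ p @ G) [^]\<^bsub>braid_group n\<^esub> m = cls n (invw G @ q @ G) [^]\<^bsub>braid_group n\<^esub> m"
  proof -
    have "cls n (invw G @ p @ G) [^]\<^bsub>braid_group n\<^esub> m = cls n (invw G @ pw m p @ G)"
      using pow_bg[of n "invw G @ p @ G" m] vG p cls_cong[OF WP[OF vG]] by simp
    also have "\<dots> = cls n (invw G @ pw m q @ G)" by (rule cls_cong[OF bc_ctxt[OF c]])
    also have "\<dots> = cls n (invw G @ q @ G) [^]\<^bsub>braid_group n\<^esub> m"
      using pow_bg[of n "invw G @ q @ G" m] vG q cls_cong[OF WP[OF vG]] by simp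
    finally show ?thesis .
  qed
  then have "cls n (invw G @ p @ G) = cls n (invw G @ q @ G)"
    using biord_root[OF group_bg sg bo uH vH m] by blast
  then have "braid_cong n (invw G @ p @ G) (invw G @ q @ G)"
    using cls_eq_iff vG q by simp
  then show ?thesis by (rule WC[OF vG])
qed

lemma lk_g: "lk [(i,True),(i,True)] a b = (if (a = i \<and> b = Suc i) \<or> (a = Suc i \<and> b = i) then 2 else 0)"
  by (auto simp: transpose_def)

lemma qp_g: "qp [(i,True),(i,True)] = id"
  by (auto simp: fun_eq_iff)

lemma lk_contra:
  assumes c: "braid_cong n ([(i,True),(i,True)] @ x) (x @ [(i,True),(i,True)])"
    and ne: "\<not> ((perm_of_bword x i = i \<and> perm_of_bword x (Suc i) = Suc i) \<or> (perm_of_bword x i = Suc i \<and> perm_of_bword x (Suc i) = i))"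
  shows False
proof -
  let ?A = "perm_of_bword x i" and ?B = "perm_of_bword x (Suc i)"
  have qa: "qp x ?A = i" "qp x ?B = Suc i" using qp_perm[of x] by (auto simp: fun_eq_iff)
  have "lk ([(i,True),(i,True)] @ x) ?A ?B = lk (x @ [(i,True),(i,True)]) ?A ?B"
    using cong_inv[OF c] by simp
  then have "lk [(i,True),(i,True)] ?A ?B + lk x ?A ?B = lk x ?A ?B + lk [(i,True),(i,True)] i (Suc i)"
    unfolding lk_app qp_g qa by simp
  then have "lk [(i,True),(i,True)] ?A ?B = 2" by (simp add: lk_g)
  then show False using ne unfolding lk_g by (auto split: if_splits)
qed



lemma build_x:
  assumes c: "\<forall>x\<in>set c. 1 \<le> fst x \<and> fst x < j" and jn: "j \<le> n"
    and tp: "\<tau>' permutes {1..n}" and agree: "\<forall>i\<in>{1..j}. \<tau>' i = perm_of_bword c i"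
  shows "\<exists>w. (\<forall>x\<in>set w. Suc j \<le> fst x \<and> fst x < n) \<and> perm_of_bword (c @ w) = \<tau>'"
proof -
  let ?P = "perm_of_bword c"
  have vc: "valid_bword n c" using c jn by (fastforce simp: valid_bword_def)
  have Pp: "?P permutes {1..n}" by (rule perm_valid_permutes[OF vc])
  define f where "f = inv_into UNIV ?P \<circ> \<tau>'"
  have fp: "f permutes {1..n}" unfolding f_def by (intro permutes_compose tp permutes_inv Pp)
  have ffix: "f i = i" if "i \<in> {1..j}" for i
    using agree that permutes_inverses(2)[OF Pp] by (simp add: f_def)
  have "f permutes {Suc j..n}"
    unfolding permutes_def
  proof (intro conjI allI impI)
    fix x assume x: "x \<notin> {Suc j..n}"
    show "f x = x"
    proof (cases "x \<in> {1..j}")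
      case True then show ?thesis by (rule ffix)
    next
      case False then have "x \<notin> {1..n}" using x by auto
      then show ?thesis using permutes_not_in[OF fp] by blast
    qed
  next
    fix y show "\<exists>!x. f x = y" using fp unfolding permutes_def by blast
  qed
  then obtain w where w: "\<forall>x\<in>set w. Suc j \<le> fst x \<and> fst x < n" "perm_of_bword w = f"
    using perm_surj by blast
  have "perm_of_bword (c @ w) = (?P \<circ> inv_into UNIV ?P) \<circ> \<tau>'" using w(2) by (simp add: f_def o_assoc)
  also have "\<dots> = \<tau>'" using permutes_inv_o(1)[OF Pp] by simp
  finally show ?thesis using w(1) by blast
qed

lemma perm_dd: "1 \<le> k \<Longrightarrow> (\<forall>i. 1 \<le> i \<and> i < k \<longrightarrow> perm_of_bword (dd k) i = Suc i) \<and> perm_of_bword (dd k) k = 1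
   \<and> (\<forall>i. k < i \<or> i = 0 \<longrightarrow> perm_of_bword (dd k) i = i)"
proof (induction k rule: nat_induct_at_least)
  case base then show ?case by (simp add: dd_def)
next
  case (Suc k)
  have e: "perm_of_bword (dd (Suc k)) = perm_of_bword (dd k) \<circ> transpose k (Suc k)"
    using Suc by (simp add: dd_Suc)
  show ?case unfolding e using Suc by (auto simp: transpose_def)
qed

lemma set_pw: "set (pw m b) \<subseteq> set b"
  by (induction m) auto

lemma PWC:
  assumes "\<forall>x\<in>set a. \<forall>y\<in>set b. comm n x y"
  shows "braid_cong n (pw m (a@b)) (pw m a @ pw m b)"
proof (induction m)
  case 0 then show ?case by (simp add: braid_cong.refl)
next
  case (Suc m)
  have "braid_cong n (pw m (a@b) @ (a@b)) ((pw m a @ pw m b) @ (a@b))"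
    by (rule bc_app[OF Suc.IH braid_cong.refl])
  moreover have "braid_cong n (pw m a @ (pw m b @ a) @ b) (pw m a @ (a @ pw m b) @ b)"
  proof (rule bc_ctxt, rule braid_cong.sym, rule comm_words)
    show "\<forall>x\<in>set a. \<forall>y\<in>set (pw m b). comm n x y" using assms set_pw by blast
  qed
  ultimately show ?case by (auto intro: braid_cong.trans)
qed

lemma comm_sq:
  assumes "braid_cong n (y # X) (X @ [y])"
  shows "braid_cong n ([y,y] @ X) (X @ [y,y])"
proof -
  have "braid_cong n ([y] @ (y # X) @ []) ([y] @ (X @ [y]) @ [])" by (rule bc_ctxt[OF assms])
  moreover have "braid_cong n ([] @ (y # X) @ [y]) ([] @ (X @ [y]) @ [y])" by (rule bc_ctxt[OF assms])
  ultimately show ?thesis by (auto intro: braid_cong.trans)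
qed



lemma case_AC:
  assumes sg: "subgroup H (braid_group n)" and pure: "pure_braid_group n \<subseteq> H"
    and bo: "bi_orderable (braid_group n) H"
    and w0: "valid_bword n w0" "cls n w0 \<in> H"
    and r: "\<rho> permutes {1..n}"
    and c: "\<forall>x\<in>set c. 1 \<le> fst x \<and> fst x < j" and j: "3 \<le> j" "j \<le> n"
    and agree: "\<forall>i\<in>{1..j}. (\<rho> \<circ> perm_of_bword w0 \<circ> inv_into UNIV \<rho>) i = perm_of_bword c i"
    and m: "m > 0"
    and comm1: "braid_cong n ((1,True) # pw m c) (pw m c @ [(1,True)])"
    and ne: "\<not> (((\<rho> \<circ> perm_of_bword w0 \<circ> inv_into UNIV \<rho>) 1 = 1 \<and> (\<rho> \<circ> perm_of_bword w0 \<circ> inv_into UNIV \<rho>) 2 = 2)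
              \<or> ((\<rho> \<circ> perm_of_bword w0 \<circ> inv_into UNIV \<rho>) 1 = 2 \<and> (\<rho> \<circ> perm_of_bword w0 \<circ> inv_into UNIV \<rho>) 2 = 1))"
  shows False
proof -
  let ?t = "\<rho> \<circ> perm_of_bword w0 \<circ> inv_into UNIV \<rho>"
  have tp: "?t permutes {1..n}"
    by (intro permutes_compose perm_valid_permutes w0 r permutes_inv)
  obtain w where w: "\<forall>x\<in>set w. Suc j \<le> fst x \<and> fst x < n" "perm_of_bword (c @ w) = ?t"
    using build_x[OF c j(2) tp agree] by blast
  define x where "x = c @ w"
  have vx: "valid_bword n x" using c w(1) j unfolding x_def by (fastforce simp: valid_bword_def)
  have cw: "\<forall>a\<in>set c. \<forall>b\<in>set w. comm n a b"
  proof (intro ballI)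
    fix a b assume a: "a \<in> set c" and b: "b \<in> set w"
    have "1 \<le> fst a" "fst a < j" using c a by auto
    moreover have "Suc j \<le> fst b" "fst b < n" using w(1) b by auto
    ultimately show "comm n a b" using j by (intro comm_far) auto
  qed
  have pwx: "braid_cong n (pw m x) (pw m c @ pw m w)" unfolding x_def by (rule PWC[OF cw])
  have s1w: "braid_cong n ((1,True) # pw m w) (pw m w @ [(1,True)])"
  proof (rule comm_word)
    show "\<forall>y\<in>set (pw m w). comm n (1, True) y"
    proof
      fix b assume "b \<in> set (pw m w)"
      then have "Suc j \<le> fst b" "fst b < n" using w(1) set_pw[of m w] by auto
      then show "comm n (1, True) b" using j by (intro comm_far) auto
    qed
  qed
  have s1x: "braid_cong n ((1,True) # pw m x) (pw m x @ [(1,True)])"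
  proof -
    have a: "braid_cong n ([(1,True)] @ pw m x @ []) ([(1,True)] @ (pw m c @ pw m w) @ [])"
      by (rule bc_ctxt[OF pwx])
    have b: "braid_cong n ([] @ ((1,True) # pw m c) @ pw m w) ([] @ (pw m c @ [(1,True)]) @ pw m w)"
      by (rule bc_ctxt[OF comm1])
    have d: "braid_cong n (pw m c @ ((1,True) # pw m w) @ []) (pw m c @ (pw m w @ [(1,True)]) @ [])"
      by (rule bc_ctxt[OF s1w])
    have e: "braid_cong n ([] @ (pw m c @ pw m w) @ [(1,True)]) ([] @ pw m x @ [(1,True)])"
      by (rule bc_ctxt[OF braid_cong.sym[OF pwx]])
    show ?thesis using a b d e by (auto intro: braid_cong.trans)
  qed
  define g where "g = [(1::nat,True),(1::nat,True)]"
  have gx: "braid_cong n (g @ pw m x) (pw m x @ g)" unfolding g_def by (rule comm_sq[OF s1x])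
  have vg: "valid_bword n g" using j by (simp add: g_def)
  have pg: "perm_of_bword g = id" "perm_of_bword (invw g) = id"
    by (auto simp: g_def invw_def inl_def fun_eq_iff)
  have px: "perm_of_bword x = ?t" using w(2) x_def by simp
  have cp: "braid_cong n (pw m (g @ x @ invw g)) (pw m x)"
  proof -
    have a: "braid_cong n (pw m (g @ x @ invw g)) (g @ pw m x @ invw g)"
      using WP[of n "invw g" m x] vg by simp
    have b: "braid_cong n ([] @ (g @ pw m x) @ invw g) ([] @ (pw m x @ g) @ invw g)"
      by (rule bc_ctxt[OF gx])
    have d: "braid_cong n (pw m x @ (g @ invw g) @ []) (pw m x @ [] @ [])"
      by (rule bc_ctxt[OF bc_inv_right[OF vg]])
    show ?thesis using a b d by (auto intro: braid_cong.trans)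
  qed
  have "braid_cong n (g @ x @ invw g) x"
    by (rule root_words[OF sg pure bo w0 r _ _ vx _ m cp]) (use vx vg pg px in auto)
  then have "braid_cong n ((g @ x) @ (invw g @ g)) (x @ g)"
    using bc_ctxt[of n "g @ x @ invw g" x "[]" g] by simp
  moreover have "braid_cong n ((g @ x) @ (invw g @ g) @ []) ((g @ x) @ [] @ [])"
    by (rule bc_ctxt[OF bc_inv_left[OF vg]])
  ultimately have "braid_cong n (g @ x) (x @ g)" by (auto intro: braid_cong.trans braid_cong.sym)
  then show False
    using lk_contra[of n 1 x] ne px unfolding g_def by (simp add: numeral_2_eq_2)
qed



lemma bc_braid12: "3 \<le> n \<Longrightarrow> braid_cong n [(1,True),(2,True),(1,True)] [(2,True),(1,True),(2,True)]"
  using braid_cong.base[OF braid_rel.braid[of 1 n]] by (simp add: numeral_2_eq_2)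

lemma concrete:
  assumes n: "3 \<le> n"
  shows "braid_cong n (pw 2 ([(1,True)] @ [(2,True),(2,True)])) (pw 2 ([(2,True),(2,True)] @ [(1,True)]))"
proof -
  let ?a = "(1::nat,True)" and ?b = "(2::nat,True)"
  have r: "braid_cong n [?a,?b,?a] [?b,?a,?b]" by (rule bc_braid12[OF n])
  have s1: "braid_cong n ([?a,?b] @ [?b,?a,?b] @ [?b]) ([?a,?b] @ [?a,?b,?a] @ [?b])"
    by (rule bc_ctxt[OF braid_cong.sym[OF r]])
  have s2: "braid_cong n ([] @ [?a,?b,?a] @ [?b,?a,?b]) ([] @ [?b,?a,?b] @ [?b,?a,?b])"
    by (rule bc_ctxt[OF r])
  have s3: "braid_cong n ([?b,?a,?b] @ [?b,?a,?b] @ []) ([?b,?a,?b] @ [?a,?b,?a] @ [])"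
    by (rule bc_ctxt[OF braid_cong.sym[OF r]])
  have s4: "braid_cong n ([?b] @ [?b,?a,?b] @ [?b,?a]) ([?b] @ [?a,?b,?a] @ [?b,?a])"
    by (rule bc_ctxt[OF braid_cong.sym[OF r]])
  have "braid_cong n [?a,?b,?b,?a,?b,?b] [?b,?b,?a,?b,?b,?a]"
  proof -
    have "braid_cong n [?a,?b,?b,?a,?b,?b] [?b,?a,?b,?a,?b,?a]"
      using braid_cong.trans[OF braid_cong.trans[OF s1[simplified] s2[simplified]] s3[simplified]] by simp
    moreover have "braid_cong n [?b,?b,?a,?b,?b,?a] [?b,?a,?b,?a,?b,?a]" using s4 by simp
    ultimately show ?thesis by (rule braid_cong.trans[OF _ braid_cong.sym])
  qed
  then show ?thesis by (simp add: numeral_2_eq_2)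
qed

lemma case_B:
  assumes sg: "subgroup H (braid_group n)" and pure: "pure_braid_group n \<subseteq> H"
    and bo: "bi_orderable (braid_group n) H"
    and w0: "valid_bword n w0" "cls n w0 \<in> H"
    and r: "\<rho> permutes {1..n}" and n3: "3 \<le> n"
    and t1: "(\<rho> \<circ> perm_of_bword w0 \<circ> inv_into UNIV \<rho>) 1 = 2"
    and t2: "(\<rho> \<circ> perm_of_bword w0 \<circ> inv_into UNIV \<rho>) 2 = 1"
    and t3: "(\<rho> \<circ> perm_of_bword w0 \<circ> inv_into UNIV \<rho>) 3 = 3"
  shows False
proof -
  let ?t = "\<rho> \<circ> perm_of_bword w0 \<circ> inv_into UNIV \<rho>"
  have tp: "?t permutes {1..n}"
    by (intro permutes_compose perm_valid_permutes w0 r permutes_inv)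
  define c where "c = [(1::nat,True)]"
  have agree: "\<forall>i\<in>{1..3}. ?t i = perm_of_bword c i"
  proof
    fix i :: nat assume "i \<in> {1..3}"
    then have "i = 1 \<or> i = 2 \<or> i = 3" by auto
    then show "?t i = perm_of_bword c i" using t1 t2 t3 by (auto simp: c_def transpose_def)
  qed
  obtain w where w: "\<forall>x\<in>set w. Suc 3 \<le> fst x \<and> fst x < n" "perm_of_bword (c @ w) = ?t"
    using build_x[of c 3 n ?t] agree n3 tp by (auto simp: c_def)
  define x where "x = c @ w"
  define t where "t = [(2::nat,True),(2::nat,True)]"
  have vx: "valid_bword n x" using w(1) n3 unfolding x_def c_def by (fastforce simp: valid_bword_def)
  have vt: "valid_bword n t" using n3 by (simp add: t_def)
  have px: "perm_of_bword x = ?t" using w(2) x_def by simp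
  have pt: "perm_of_bword t = id" by (auto simp: t_def fun_eq_iff)
  have far4: "comm n a b" if "a \<in> set (c @ t)" "b \<in> set w" for a b
  proof -
    have "Suc 3 \<le> fst b" "fst b < n" using w(1) that(2) by auto
    moreover have "fst a = 1 \<or> fst a = 2" using that(1) by (auto simp: c_def t_def)
    ultimately show ?thesis by (intro comm_far) auto
  qed
  have wt: "braid_cong n (w @ t) (t @ w)"
    by (rule braid_cong.sym, rule comm_words) (use far4 in auto)
  have ct: "\<forall>a\<in>set (c @ t). \<forall>b\<in>set w. comm n a b" using far4 by blast
  have tc: "\<forall>a\<in>set (t @ c). \<forall>b\<in>set w. comm n a b" using far4 by auto
  have e1: "braid_cong n (pw 2 (x @ t)) (pw 2 (c @ t) @ pw 2 w)"
  proof -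
    have "braid_cong n (c @ (w @ t) @ []) (c @ (t @ w) @ [])" by (rule bc_ctxt[OF wt])
    then have "braid_cong n (x @ t) ((c @ t) @ w)" by (simp add: x_def)
    then show ?thesis using braid_cong.trans[OF cong_pw PWC[OF ct]] by blast
  qed
  have e2: "braid_cong n (pw 2 (t @ x)) (pw 2 (t @ c) @ pw 2 w)"
    using PWC[OF tc] by (simp add: x_def)
  have e3: "braid_cong n (pw 2 (c @ t) @ pw 2 w) (pw 2 (t @ c) @ pw 2 w)"
    by (rule bc_app[OF _ braid_cong.refl]) (use concrete[OF n3] in \<open>simp add: c_def t_def\<close>)
  have cp: "braid_cong n (pw 2 (x @ t)) (pw 2 (t @ x))"
    using braid_cong.trans[OF braid_cong.trans[OF e1 e3] braid_cong.sym[OF e2]] .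
  have "braid_cong n (x @ t) (t @ x)"
    by (rule root_words[OF sg pure bo w0 r _ _ _ _ _ cp]) (use vx vt px pt in auto)
  then have "braid_cong n ([(2,True),(2,True)] @ x) (x @ [(2,True),(2,True)])"
    by (simp add: t_def braid_cong.sym)
  then show False
    using lk_contra[of n 2 x] px t2 t3 by (simp add: numeral_3_eq_3)
qed



theorem theorem1:
  fixes n :: nat and H :: "bword set set"
  assumes "n \<ge> 3"
    and "subgroup H (braid_group n)"
    and "pure_braid_group n \<subseteq> H"
    and "bi_orderable (braid_group n) H"
  shows "H = pure_braid_group n"
proof (rule ccontr)
  note n3 = assms(1) and sg = assms(2) and pure = assms(3) and bo = assms(4)
  assume "H \<noteq> pure_braid_group n"
  then obtain X where X: "X \<in> H" "X \<notin> pure_braid_group n" using pure by blast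
  have "X \<in> carrier (braid_group n)" using subgroup.mem_carrier[OF sg X(1)] .
  then obtain w0 where w0: "valid_bword n w0" "X = cls n w0" by (auto simp: carrier_bg)
  have w0H: "cls n w0 \<in> H" using X w0 by simp
  let ?\<tau> = "perm_of_bword w0"
  have tne: "?\<tau> \<noteq> id" using X w0 by (auto simp: pure_braid_group_def perm_cls cls_in_carrier)
  have tp: "?\<tau> permutes {1..n}" by (rule perm_valid_permutes[OF w0(1)])
  from perm_cases[OF tp tne n3] show False
  proof (elim disjE exE conjE)
    fix k \<rho>
    assume k3: "3 \<le> k" and kn: "k \<le> n" and r: "\<rho> permutes {1..n}"
      and A1: "\<forall>i. 1 \<le> i \<and> i < k \<longrightarrow> (\<rho> \<circ> ?\<tau> \<circ> inv_into UNIV \<rho>) i = Suc i"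
      and A2: "(\<rho> \<circ> ?\<tau> \<circ> inv_into UNIV \<rho>) k = 1"
    have pd: "\<forall>i. 1 \<le> i \<and> i < k \<longrightarrow> perm_of_bword (dd k) i = Suc i" "perm_of_bword (dd k) k = 1"
      using perm_dd[of k] k3 by auto
    show False
    proof (rule case_AC[OF sg pure bo w0(1) w0H r, of "dd k" k k])
      show "\<forall>x\<in>set (dd k). 1 \<le> fst x \<and> fst x < k" by (auto simp: dd_def)
      show "3 \<le> k" "k \<le> n" "0 < k" using k3 kn by auto
      show "\<forall>i\<in>{1..k}. (\<rho> \<circ> ?\<tau> \<circ> inv_into UNIV \<rho>) i = perm_of_bword (dd k) i"
      proof
        fix i assume "i \<in> {1..k}"
        then have "(1 \<le> i \<and> i < k) \<or> i = k" by auto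
        then show "(\<rho> \<circ> ?\<tau> \<circ> inv_into UNIV \<rho>) i = perm_of_bword (dd k) i" using A1 A2 pd by auto
      qed
      show "braid_cong n ((1, True) # pw k (dd k)) (pw k (dd k) @ [(1, True)])"
        using D6[of k n] k3 kn by simp
      have "(\<rho> \<circ> ?\<tau> \<circ> inv_into UNIV \<rho>) 1 = 2" "(\<rho> \<circ> ?\<tau> \<circ> inv_into UNIV \<rho>) 2 = 3"
        using A1 k3 by (auto dest: spec[of _ 1] spec[of _ 2])
      then show "\<not> (((\<rho> \<circ> ?\<tau> \<circ> inv_into UNIV \<rho>) 1 = 1 \<and> (\<rho> \<circ> ?\<tau> \<circ> inv_into UNIV \<rho>) 2 = 2) \<or>
          ((\<rho> \<circ> ?\<tau> \<circ> inv_into UNIV \<rho>) 1 = 2 \<and> (\<rho> \<circ> ?\<tau> \<circ> inv_into UNIV \<rho>) 2 = 1))" by simp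
    qed
  next
    fix \<rho>
    assume n4: "4 \<le> n" and r: "\<rho> permutes {1..n}"
      and C: "(\<rho> \<circ> ?\<tau> \<circ> inv_into UNIV \<rho>) 1 = 3" "(\<rho> \<circ> ?\<tau> \<circ> inv_into UNIV \<rho>) 2 = 4"
        "(\<rho> \<circ> ?\<tau> \<circ> inv_into UNIV \<rho>) 3 = 1" "(\<rho> \<circ> ?\<tau> \<circ> inv_into UNIV \<rho>) 4 = 2"
    have pd: "\<forall>i. 1 \<le> i \<and> i < 4 \<longrightarrow> perm_of_bword (dd 4) i = Suc i" "perm_of_bword (dd 4) 4 = 1"
      using perm_dd[of 4] by auto
    have pd4: "perm_of_bword (dd 4) 1 = 2" "perm_of_bword (dd 4) 2 = 3" "perm_of_bword (dd 4) 3 = 4"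
      using pd(1) by (auto dest: spec[of _ 1] spec[of _ 2] spec[of _ 3])
    show False
    proof (rule case_AC[OF sg pure bo w0(1) w0H r, of "dd 4 @ dd 4" 4 2])
      show "\<forall>x\<in>set (dd 4 @ dd 4). 1 \<le> fst x \<and> fst x < 4" by (auto simp: dd_def)
      show "3 \<le> (4::nat)" "4 \<le> n" "0 < (2::nat)" using n4 by auto
      show "\<forall>i\<in>{1..4}. (\<rho> \<circ> ?\<tau> \<circ> inv_into UNIV \<rho>) i = perm_of_bword (dd 4 @ dd 4) i"
      proof
        fix i :: nat assume "i \<in> {1..4}"
        then have "i = 1 \<or> i = 2 \<or> i = 3 \<or> i = 4" by auto
        then show "(\<rho> \<circ> ?\<tau> \<circ> inv_into UNIV \<rho>) i = perm_of_bword (dd 4 @ dd 4) i"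
          using C pd4 pd(2) by auto
      qed
      have "pw 2 (dd 4 @ dd 4) = pw 4 (dd 4)" by (simp add: numeral_eq_Suc)
      then show "braid_cong n ((1, True) # pw 2 (dd 4 @ dd 4)) (pw 2 (dd 4 @ dd 4) @ [(1, True)])"
        using D6[of 4 n] n4 by simp
      show "\<not> (((\<rho> \<circ> ?\<tau> \<circ> inv_into UNIV \<rho>) 1 = 1 \<and> (\<rho> \<circ> ?\<tau> \<circ> inv_into UNIV \<rho>) 2 = 2) \<or>
          ((\<rho> \<circ> ?\<tau> \<circ> inv_into UNIV \<rho>) 1 = 2 \<and> (\<rho> \<circ> ?\<tau> \<circ> inv_into UNIV \<rho>) 2 = 1))" using C by simp
    qed
  next
    fix \<rho>
    assume r: "\<rho> permutes {1..n}"
      and B: "(\<rho> \<circ> ?\<tau> \<circ> inv_into UNIV \<rho>) 1 = 2" "(\<rho> \<circ> ?\<tau> \<circ> inv_into UNIV \<rho>) 2 = 1"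
        "(\<rho> \<circ> ?\<tau> \<circ> inv_into UNIV \<rho>) 3 = 3"
    show False by (rule case_B[OF sg pure bo w0(1) w0H r n3 B])
  qed
qed


end
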